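(* Let $R$ be an abelian ring (an associative ring with identity in which every idempotent is central). Then $R$ is weakly $r$-clean if and only if $R$ is a weakly exchange ring.
   Context: For a ring $R$ with identity, $Idem(R)$ denotes its idempotents and $Reg(R)=\{r\in R:\ r=ryr \text{ for some } y\in R\}$ its regular elements. An element $x\in R$ is weakly $r$-clean if $x=r+e$ or $x=r-e$ for some $r\in Reg(R)$, $e\in Idem(R)$; $R$ is weakly $r$-clean if all its elements are. A ring $R$ is a weakly exchange ring if for every $x\in R$ there is an idempotent $e\in xR$ such that $1-e\in(1-x)R$ or $1-e\in(1+x)R$. *)

theory Defs
  imports Main
begin

definition Idem :: "'a::ring_1 set" where
  "Idem = {e. e * e = e}"

definition Reg :: "'a::ring_1 set" where
  "Reg = {r. \<exists>y. r = r * y * r}"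

definition abelian_ring :: "'a::ring_1 itself \<Rightarrow> bool" where
  "abelian_ring _ \<longleftrightarrow> (\<forall>e::'a. e \<in> Idem \<longrightarrow> (\<forall>x::'a. e * x = x * e))"

definition weakly_r_clean_elem :: "'a::ring_1 \<Rightarrow> bool" where
  "weakly_r_clean_elem x \<longleftrightarrow>
     (\<exists>r e. r \<in> Reg \<and> e \<in> Idem \<and> (x = r + e \<or> x = r - e))"

definition weakly_r_clean :: "'a::ring_1 itself \<Rightarrow> bool" where
  "weakly_r_clean _ \<longleftrightarrow> (\<forall>x::'a. weakly_r_clean_elem x)"

definition weakly_exchange :: "'a::ring_1 itself \<Rightarrow> bool" where
  "weakly_exchange _ \<longleftrightarrow>
     (\<forall>x::'a. \<exists>e. e \<in> Idem \<and> (\<exists>s. e = x * s) \<and>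
        ((\<exists>t. 1 - e = (1 - x) * t) \<or> (\<exists>t. 1 - e = (1 + x) * t)))"

end

theory Submission
  imports Defs
begin

lemma cen: "abelian_ring TYPE('a::ring_1) \<Longrightarrow> (e::'a)*e = e \<Longrightarrow> e*x = x*e"
  unfolding abelian_ring_def Idem_def by blast

lemma reg_fact:
  fixes r y :: "'a::ring_1"
  assumes ab: "abelian_ring TYPE('a)" and r: "r = r*y*r"
  shows "(r*y)*(r*y) = r*y" "r*y = y*r" "r*(r*y) = r" "(r*y)*r = r"
proof -
  have i1: "(r*y)*(r*y) = r*y" by (metis mult.assoc r)
  have i2: "(y*r)*(y*r) = y*r" by (metis mult.assoc r)
  have c1: "\<And>a. (r*y)*a = a*(r*y)" using cen[OF ab i1] .
  have c2: "\<And>a. (y*r)*a = a*(y*r)" using cen[OF ab i2] .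
  have "r*y = (r*y*r)*y" using r by simp
  also have "\<dots> = (y*r)*(r*y)" by (metis c2 mult.assoc)
  finally have a: "r*y = (y*r)*(r*y)" .
  have "y*r = y*(r*y*r)" using r by simp
  also have "\<dots> = (r*y)*(y*r)" by (metis c1 mult.assoc)
  finally have b: "y*r = (r*y)*(y*r)" .
  have rc: "r*y = y*r" using a b c1 by metis
  show "(r*y)*(r*y) = r*y" by (fact i1)
  show "r*y = y*r" by (fact rc)
  show "(r*y)*r = r" using r by simp
  show "r*(r*y) = r" using r rc by (metis mult.assoc)
qed

lemma plus_case:
  fixes r y g :: "'a::ring_1"
  assumes ab: "abelian_ring TYPE('a)" and r: "r = r*y*r" and g: "g*g = g"
  defines "e \<equiv> r*y"
  shows "(e*(1-g) + (1-e)*g) * (e*(1-g) + (1-e)*g) = e*(1-g) + (1-e)*g"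
    "(r+g)*(y*(1-g) + (1-e)*g) = e*(1-g) + (1-e)*g"
    "1 - (e*(1-g) + (1-e)*g) = (1-(r+g))*(-(y*g) + (1-e)*(1-g))"
    "(r-g)*(y*(1-g) - (1-e)*g) = e*(1-g) + (1-e)*g"
    "1 - (e*(1-g) + (1-e)*g) = (1+(r-g))*(y*g + (1-e)*(1-g))"
proof -
  note f = reg_fact[OF ab r, folded e_def]
  have ee: "e*e = e" using f by simp
  have er: "e*r = r" "r*e = r" using f by simp_all
  have eg: "g*e = e*g" using cen[OF ab g] by simp
  have gr: "r*g = g*r" "y*g = g*y" using cen[OF ab g] by simp_all
  have ge2: "g*(e*a) = e*(g*a)" for a by (metis eg mult.assoc)
  have ee2: "e*(e*a) = e*a" for a by (metis ee mult.assoc)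
  have gg2: "g*(g*a) = g*a" for a by (metis g mult.assoc)
  have er2: "e*(r*a) = r*a" "r*(e*a) = r*a" for a by (metis er mult.assoc)+
  have gr2: "r*(g*a) = g*(r*a)" "y*(g*a) = g*(y*a)" for a by (metis gr mult.assoc)+
  have ry: "r*y = e" using e_def by simp
  have ry2: "r*(y*a) = e*a" for a by (metis ry mult.assoc)
  note S = algebra_simps ee er eg gr ge2 ee2 gg2 er2 gr2 ry ry2 g
  show "(e*(1-g) + (1-e)*g) * (e*(1-g) + (1-e)*g) = e*(1-g) + (1-e)*g" by (simp add: S)
  show "(r+g)*(y*(1-g) + (1-e)*g) = e*(1-g) + (1-e)*g" by (simp add: S)
  show "1 - (e*(1-g) + (1-e)*g) = (1-(r+g))*(-(y*g) + (1-e)*(1-g))" by (simp add: S)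
  show "(r-g)*(y*(1-g) - (1-e)*g) = e*(1-g) + (1-e)*g" by (simp add: S)
  show "1 - (e*(1-g) + (1-e)*g) = (1+(r-g))*(y*g + (1-e)*(1-g))" by (simp add: S)
qed

lemma back_case:
  fixes x s t e :: "'a::ring_1"
  assumes ab: "abelian_ring TYPE('a)" and e: "e*e = e" and es: "e = x*s"
  shows "1 - e = (1-x)*t \<Longrightarrow> (x - (1-e))*(s*e - t*(1-e)) = 1"
    "1 - e = (1+x)*t \<Longrightarrow> (x + (1-e))*(s*e + t*(1-e)) = 1"
proof -
  have c: "\<And>a. e*a = a*e" using cen[OF ab e] by blast
  have xs: "x*s = e" using es by simp
  have xs2: "x*(s*a) = e*a" for a by (metis xs mult.assoc)
  have ee2: "e*(e*a) = e*a" for a by (metis e mult.assoc)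
  have ce: "x*e = e*x" "s*e = e*s" "t*e = e*t" using c by simp_all
  have ce2: "x*(e*a) = e*(x*a)" "s*(e*a) = e*(s*a)" "t*(e*a) = e*(t*a)" for a
    by (metis ce mult.assoc)+
  { assume h: "1 - e = (1-x)*t"
    have h2: "x*t = t - 1 + e" using h by (simp add: algebra_simps)
    have h3: "x*(t*a) = t*a - a + e*a" for a
      by (metis h2 mult.assoc left_diff_distrib distrib_right mult_1_left)
    show "(x - (1-e))*(s*e - t*(1-e)) = 1"
      by (simp add: algebra_simps e xs xs2 ee2 ce ce2 h2 h3) }
  { assume h: "1 - e = (1+x)*t"
    have h2: "x*t = 1 - e - t" using h by (simp add: algebra_simps)
    have h3: "x*(t*a) = a - e*a - t*a" for a
      by (metis h2 mult.assoc left_diff_distrib mult_1_left)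
    show "(x + (1-e))*(s*e + t*(1-e)) = 1"
      by (simp add: algebra_simps e xs xs2 ee2 ce ce2 h2 h3) }
qed


theorem theorem2p11:
  assumes "abelian_ring TYPE('a::ring_1)"
  shows "weakly_r_clean TYPE('a) \<longleftrightarrow> weakly_exchange TYPE('a)"
proof
  assume wc: "weakly_r_clean TYPE('a)"
  show "weakly_exchange TYPE('a)"
    unfolding weakly_exchange_def
  proof
    fix x :: 'a
    from wc obtain r g where r: "r \<in> Reg" and g: "g \<in> Idem" and x: "x = r + g \<or> x = r - g"
      unfolding weakly_r_clean_def weakly_r_clean_elem_def by blast
    from r obtain y where ry: "r = r*y*r" unfolding Reg_def by blast
    have gg: "g*g = g" using g unfolding Idem_def mem_Collect_eq .
    note P = plus_case[OF assms ry gg]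
    let ?E = "r*y*(1-g) + (1-r*y)*g"
    have EI: "?E \<in> Idem" unfolding Idem_def mem_Collect_eq by (rule P(1))
    from x show "\<exists>e. e \<in> Idem \<and> (\<exists>s. e = x * s) \<and>
        ((\<exists>t. 1 - e = (1 - x) * t) \<or> (\<exists>t. 1 - e = (1 + x) * t))"
    proof
      assume xe: "x = r + g"
      show ?thesis
        apply (rule exI[of _ ?E])
        unfolding xe
        apply (intro conjI disjI1 exI)
          apply (rule EI)
         apply (rule P(2)[symmetric])
        apply (rule P(3))
        done
    next
      assume xe: "x = r - g"
      show ?thesis
        apply (rule exI[of _ ?E])
        unfolding xe
        apply (intro conjI disjI2 exI)
          apply (rule EI)
         apply (rule P(4)[symmetric])
        apply (rule P(5))
        done
    qed
  qed
next
  assume we: "weakly_exchange TYPE('a)"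
  show "weakly_r_clean TYPE('a)"
    unfolding weakly_r_clean_def weakly_r_clean_elem_def
  proof
    fix x :: 'a
    have "\<exists>e. e \<in> Idem \<and> (\<exists>s. e = x * s) \<and>
        ((\<exists>t. 1 - e = (1 - x) * t) \<or> (\<exists>t. 1 - e = (1 + x) * t))"
      using we unfolding weakly_exchange_def by (rule spec)
    then obtain e s where e: "e \<in> Idem" and es: "e = x*s"
      and h: "(\<exists>t. 1 - e = (1 - x) * t) \<or> (\<exists>t. 1 - e = (1 + x) * t)"
      by blast
    have ee: "e*e = e" using e unfolding Idem_def mem_Collect_eq .
    have "(1-e)*(1-e) = 1 - e - e + e*e" by (simp add: algebra_simps)
    then have "(1-e)*(1-e) = 1-e" using ee by simp
    then have ie: "1 - e \<in> Idem" unfolding Idem_def mem_Collect_eq .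
    note B = back_case[OF assms ee es]
    from h show "\<exists>r e. r \<in> Reg \<and> e \<in> Idem \<and> (x = r + e \<or> x = r - e)"
    proof
      assume "\<exists>t. 1 - e = (1 - x) * t"
      then obtain t where t: "1 - e = (1 - x) * t" by blast
      have "x - (1-e) = (x - (1-e))*(s*e - t*(1-e))*(x - (1-e))" by (simp only: B(1)[OF t] mult_1_left)
      then have "x - (1-e) \<in> Reg" unfolding Reg_def by blast
      moreover have "x = (x - (1-e)) + (1-e)" by simp
      ultimately show ?thesis using ie by (intro exI[of _ "x - (1-e)"] exI[of _ "1-e"]) simp
    next
      assume "\<exists>t. 1 - e = (1 + x) * t"
      then obtain t where t: "1 - e = (1 + x) * t" by blast
      have "x + (1-e) = (x + (1-e))*(s*e + t*(1-e))*(x + (1-e))" by (simp only: B(2)[OF t] mult_1_left)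
      then have "x + (1-e) \<in> Reg" unfolding Reg_def by blast
      moreover have "x = (x + (1-e)) - (1-e)" by simp
      ultimately show ?thesis using ie by (intro exI[of _ "x + (1-e)"] exI[of _ "1-e"]) simp
    qed
  qed
qed

end
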